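(* Let $G=(V,E,w_G)$ be a directed graph with non-negative integer edge weights, $n=|V|$, $s\in V$, and $1\le h\le n$ an integer. Let $C\subseteq V$ contain $s$ and, for every pair of nodes $u,v$ for which the shortest path from $u$ to $v$ in $G$ consists of exactly $\lceil h/2\rceil$ nodes, at least one node of one of these shortest paths. For each $x\in C$ let $\tilde d(x,\cdot)$ satisfy $\mathrm{dist}_G(x,v)\le \tilde d(x,v)\le 2\,\mathrm{dist}^h_G(x,v)$ for all $v\in V$. Let $H=(C,C^2,w_H)$ with $w_H(x,y)=\tilde d(x,y)$. Let $G'=(V,E\cup(\{s\}\times C),w_{G'})$ where $w_{G'}(u,v)=\mathrm{dist}_H(u,v)$ for $(u,v)\in(\{s\}\times C)\setminus E$, $w_{G'}(u,v)=2w_G(u,v)$ for $(u,v)\in E\setminus(\{s\}\times C)$, and $w_{G'}(u,v)=\min(\mathrm{dist}_H(u,v),2w_G(u,v))$ for $(u,v)\in E\cap(\{s\}\times C)$. Then for every node $v\in V$, $\mathrm{dist}^h_{G'}(s,v)=\mathrm{dist}_{G'}(s,v)$.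
   Context: For a weighted directed graph, $\mathrm{dist}(u,v)$ denotes the minimum weight of a directed path from $u$ to $v$. For an integer $h\ge1$, the $h$-hop distance $\mathrm{dist}^h(u,v)$ is the minimum weight among all directed paths from $u$ to $v$ with at most $h$ edges. *)

theory Defs
  imports "HOL-Library.Extended_Real"
begin

text \<open>A weighted directed graph is given by a vertex set V, an edge set E and a
weight function w on pairs of vertices (only its values on E matter). Weights are extended reals, so that unreachable
pairs have distance infinity.\<close>

definition is_path :: "'a set \<Rightarrow> ('a \<times> 'a) set \<Rightarrow> 'a list \<Rightarrow> 'a \<Rightarrow> 'a \<Rightarrow> bool" where
  "is_path V E p u v \<longleftrightarrow> p \<noteq> [] \<and> hd p = u \<and> last p = v \<and> set p \<subseteq> V \<and> distinct p \<and>
     (\<forall>i. Suc i < length p \<longrightarrow> (p ! i, p ! Suc i) \<in> E)"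

definition path_weight :: "('a \<times> 'a \<Rightarrow> ereal) \<Rightarrow> 'a list \<Rightarrow> ereal" where
  "path_weight w p = (\<Sum>i < length p - 1. w (p ! i, p ! Suc i))"

definition dist :: "'a set \<Rightarrow> ('a \<times> 'a) set \<Rightarrow> ('a \<times> 'a \<Rightarrow> ereal) \<Rightarrow> 'a \<Rightarrow> 'a \<Rightarrow> ereal" where
  "dist V E w u v = Inf (path_weight w ` {p. is_path V E p u v})"

text \<open>h-hop distance: minimum weight of a directed path with at most h edges
(i.e. at most h+1 nodes).\<close>
definition hdist :: "nat \<Rightarrow> 'a set \<Rightarrow> ('a \<times> 'a) set \<Rightarrow> ('a \<times> 'a \<Rightarrow> ereal) \<Rightarrow> 'a \<Rightarrow> 'a \<Rightarrow> ereal" where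
  "hdist h V E w u v = Inf (path_weight w ` {p. is_path V E p u v \<and> length p \<le> Suc h})"

definition is_shortest_path :: "'a set \<Rightarrow> ('a \<times> 'a) set \<Rightarrow> ('a \<times> 'a \<Rightarrow> ereal) \<Rightarrow> 'a list \<Rightarrow> 'a \<Rightarrow> 'a \<Rightarrow> bool" where
  "is_shortest_path V E w p u v \<longleftrightarrow> is_path V E p u v \<and> path_weight w p = dist V E w u v"

end

theory Submission
  imports Defs
begin


fun pw :: "('a \<times> 'a \<Rightarrow> ereal) \<Rightarrow> 'a list \<Rightarrow> ereal" where
  "pw w (x # y # r) = w (x, y) + pw w (y # r)"
| "pw w _ = 0"

fun pwr :: "('a \<times> 'a \<Rightarrow> real) \<Rightarrow> 'a list \<Rightarrow> real" where
  "pwr w (x # y # r) = w (x, y) + pwr w (y # r)"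
| "pwr w _ = 0"

fun walk :: "('a \<times> 'a) set \<Rightarrow> 'a list \<Rightarrow> bool" where
  "walk E (x # y # r) = ((x, y) \<in> E \<and> walk E (y # r))"
| "walk E _ = True"

lemma pw_ereal: "pw (\<lambda>e. ereal (f e)) xs = ereal (pwr f xs)"
  by (induction f xs rule: pwr.induct) auto

lemma path_weight_pw: "path_weight w p = pw w p"
proof (induction w p rule: pw.induct)
  case (1 w x y r)
  have "path_weight w (x # y # r) = (\<Sum>i < Suc (length r). w ((x # y # r) ! i, (x # y # r) ! Suc i))"
    by (simp add: path_weight_def)
  also have "\<dots> = w (x, y) + (\<Sum>i < length r. w ((y # r) ! i, (y # r) ! Suc i))"
    by (subst sum.lessThan_Suc_shift) simp
  also have "\<dots> = w (x, y) + path_weight w (y # r)" by (simp add: path_weight_def)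
  finally show ?case using 1 by simp
qed (auto simp: path_weight_def)

lemma walk_nth: "walk E p \<longleftrightarrow> (\<forall>i. Suc i < length p \<longrightarrow> (p ! i, p ! Suc i) \<in> E)"
proof (induction E p rule: walk.induct)
  case (1 E x y r)
  show ?case
  proof
    assume "walk E (x # y # r)"
    then show "\<forall>i. Suc i < length (x # y # r) \<longrightarrow> ((x # y # r) ! i, (x # y # r) ! Suc i) \<in> E"
      using 1 by (auto simp: nth_Cons split: nat.splits)
  next
    assume a: "\<forall>i. Suc i < length (x # y # r) \<longrightarrow> ((x # y # r) ! i, (x # y # r) ! Suc i) \<in> E"
    have "(x, y) \<in> E" using a[rule_format, of 0] by simp
    moreover have "\<forall>i. Suc i < length (y # r) \<longrightarrow> ((y # r) ! i, (y # r) ! Suc i) \<in> E"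
      using a by (metis Suc_less_eq length_Cons nth_Cons_Suc)
    ultimately show "walk E (x # y # r)" using 1 by simp
  qed
qed auto

lemma is_path_iff: "is_path V E p u v \<longleftrightarrow> p \<noteq> [] \<and> hd p = u \<and> last p = v \<and> set p \<subseteq> V \<and> distinct p \<and> walk E p"
  by (simp add: is_path_def walk_nth)

lemma pw_app: "xs \<noteq> [] \<Longrightarrow> pw w (xs @ ys) = pw w xs + pw w (last xs # ys)"
  by (induction xs rule: induct_list012) (auto simp: add.assoc)

lemma pwr_app: "xs \<noteq> [] \<Longrightarrow> pwr w (xs @ ys) = pwr w xs + pwr w (last xs # ys)"
  by (induction xs rule: induct_list012) auto

lemma walk_app: "xs \<noteq> [] \<Longrightarrow> walk E (xs @ ys) \<longleftrightarrow> walk E xs \<and> walk E (last xs # ys)"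
  by (induction xs rule: induct_list012) auto

lemma pw_nonneg: "\<forall>e\<in>E. 0 \<le> w e \<Longrightarrow> walk E p \<Longrightarrow> 0 \<le> pw w p"
  by (induction w p rule: pw.induct) auto

lemma pwr_nonneg: "\<forall>e. 0 \<le> w e \<Longrightarrow> 0 \<le> pwr w p"
  by (induction w p rule: pwr.induct) auto

lemma shortcut:
  assumes nn: "\<forall>e\<in>E. 0 \<le> w e"
  shows "walk E p \<Longrightarrow> p \<noteq> [] \<Longrightarrow> set p \<subseteq> V \<Longrightarrow>
    \<exists>q. is_path V E q (hd p) (last p) \<and> pw w q \<le> pw w p \<and> length q \<le> length p"
proof (induction p rule: length_induct)
  case (1 p)
  show ?case
  proof (cases "distinct p")
    case True then show ?thesis using 1 by (auto simp: is_path_iff)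
  next
    case False
    then obtain ys x zs vs where p: "p = ys @ [x] @ zs @ [x] @ vs"
      using not_distinct_decomp by blast
    define p' where "p' = ys @ x # vs"
    have w0: "walk E ((ys @ [x]) @ (zs @ [x] @ vs))"
      using "1.prems"(1) unfolding p by simp
    have w1: "walk E (ys @ [x])" "walk E ((x # zs @ [x]) @ vs)"
      using w0 walk_app[of "ys @ [x]" E "zs @ [x] @ vs"] by auto
    have wk: "walk E (ys @ [x])" "walk E (x # zs @ [x])" "walk E (x # vs)"
      using w1 walk_app[of "x # zs @ [x]" E vs] by auto
    have "walk E p'" unfolding p'_def using wk walk_app[of "ys @ [x]" E vs] by simp
    moreover have "p' \<noteq> []" "set p' \<subseteq> V" "length p' < length p"
      using "1.prems" unfolding p p'_def by auto
    moreover have "hd p' = hd p" "last p' = last p" unfolding p p'_def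
      by (cases ys; simp) (cases vs; simp)
    moreover have "pw w p' \<le> pw w p"
    proof -
      have "pw w p' = pw w (ys @ [x]) + pw w (x # vs)"
        unfolding p'_def using pw_app[of "ys @ [x]" w vs] by simp
      also have "\<dots> \<le> pw w (ys @ [x]) + pw w (x # zs @ [x]) + pw w (x # vs)"
        using pw_nonneg[OF nn wk(2)] by (simp add: add_increasing2 add.commute add_left_mono)
      also have "\<dots> = pw w p"
        unfolding p using pw_app[of "ys @ [x]" w "zs @ [x] @ vs"] pw_app[of "x # zs @ [x]" w vs]
        by (simp add: add.assoc)
      finally show ?thesis .
    qed
    ultimately show ?thesis using "1.IH" by (metis dual_order.trans less_imp_le_nat)
  qed
qed


lemma dist_le: "is_path V E p u v \<Longrightarrow> dist V E w u v \<le> pw w p"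
  unfolding dist_def path_weight_pw[symmetric] by (rule Inf_lower) auto

lemma hdist_le: "is_path V E p u v \<Longrightarrow> length p \<le> Suc h \<Longrightarrow> hdist h V E w u v \<le> pw w p"
  unfolding hdist_def path_weight_pw[symmetric] by (rule Inf_lower) auto

lemma dist_le_hdist: "dist V E w u v \<le> hdist h V E w u v"
  unfolding hdist_def dist_def by (rule Inf_superset_mono) auto

lemma dist_nonneg: "\<forall>e\<in>E. 0 \<le> w e \<Longrightarrow> 0 \<le> dist V E w u v"
  unfolding dist_def path_weight_pw by (rule Inf_greatest) (auto simp: is_path_iff intro: pw_nonneg)

lemma finite_paths: "finite V \<Longrightarrow> finite {p. is_path V E p u v}"
proof -
  assume f: "finite V"
  have "{p. is_path V E p u v} \<subseteq> {xs. set xs \<subseteq> V \<and> length xs \<le> card V}"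
    by (auto simp: is_path_iff) (metis card_mono distinct_card f)
  then show ?thesis using finite_lists_length_le[OF f] finite_subset by blast
qed

lemma dist_attained:
  assumes "finite V" "is_path V E p0 u v"
  shows "\<exists>p. is_path V E p u v \<and> pw w p = dist V E w u v"
proof -
  let ?A = "pw w ` {p. is_path V E p u v}"
  have "finite ?A" "?A \<noteq> {}" using finite_paths[OF assms(1)] assms(2) by auto
  then have "Inf ?A \<in> ?A" using Min_in Min_Inf by metis
  then show ?thesis unfolding dist_def path_weight_pw by auto
qed

lemma dist_walk:
  assumes "\<forall>e\<in>E. 0 \<le> w e" "walk E p" "p \<noteq> []" "set p \<subseteq> V"
  shows "dist V E w (hd p) (last p) \<le> pw w p"
  using shortcut[OF assms(1-4)] dist_le order_trans by metis

lemma dist_triangle: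
  assumes f: "finite V" and nn: "\<forall>e\<in>E. 0 \<le> w e" and yz: "(y, z) \<in> E" and zV: "z \<in> V"
  shows "dist V E w x z \<le> dist V E w x y + w (y, z)"
proof (cases "\<exists>p. is_path V E p x y")
  case True
  then obtain p where p: "is_path V E p x y" "pw w p = dist V E w x y"
    using dist_attained[OF f] by metis
  have "walk E (p @ [z])" using p(1) yz by (auto simp: is_path_iff walk_app)
  moreover have "pw w (p @ [z]) = pw w p + w (y, z)" using p(1) pw_app[of p w "[z]"]
    by (auto simp: is_path_iff)
  ultimately have "dist V E w x z \<le> pw w p + w (y, z)"
    using dist_walk[OF nn, of "p @ [z]"] p(1) zV by (auto simp: is_path_iff)
  then show ?thesis using p(2) by simp
next
  case False
  then have "dist V E w x y = \<infinity>" unfolding dist_def by (simp add: top_ereal_def)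
  moreover have "0 \<le> w (y, z)" using nn yz by auto
  ultimately show ?thesis by simp
qed


lemma walk_Cons: "ys \<noteq> [] \<Longrightarrow> walk E (x # ys) \<longleftrightarrow> (x, hd ys) \<in> E \<and> walk E ys"
  by (cases ys) auto

lemma pwr_Cons: "ys \<noteq> [] \<Longrightarrow> pwr w (x # ys) = w (x, hd ys) + pwr w ys"
  by (cases ys) auto

lemma pw_Cons: "ys \<noteq> [] \<Longrightarrow> pw w (x # ys) = w (x, hd ys) + pw w ys"
  by (cases ys) auto



theorem lemma3p3:
  fixes V :: "'a set" and E :: "('a \<times> 'a) set" and wG :: "'a \<times> 'a \<Rightarrow> nat"
    and s :: 'a and h :: nat and C :: "'a set" and dt :: "'a \<Rightarrow> 'a \<Rightarrow> ereal"
  assumes finV: "finite V"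
    and EV: "E \<subseteq> V \<times> V"
    and sV: "s \<in> V"
    and h1: "1 \<le> h" and hn: "h \<le> card V"
    and CV: "C \<subseteq> V" and sC: "s \<in> C"
    and hit: "\<forall>u v. (\<exists>p. is_shortest_path V E (\<lambda>e. ereal (real (wG e))) p u v
                          \<and> length p = nat \<lceil>real h / 2\<rceil>)
               \<longrightarrow> (\<exists>p. is_shortest_path V E (\<lambda>e. ereal (real (wG e))) p u v
                          \<and> length p = nat \<lceil>real h / 2\<rceil> \<and> set p \<inter> C \<noteq> {})"
    and dt: "\<forall>x\<in>C. \<forall>v\<in>V. dist V E (\<lambda>e. ereal (real (wG e))) x v \<le> dt x v
                         \<and> dt x v \<le> 2 * hdist h V E (\<lambda>e. ereal (real (wG e))) x v"
  shows "\<forall>v\<in>V.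
    (let dH = (\<lambda>(x, y). dist C (C \<times> C) (\<lambda>(a, b). dt a b) x y);
         E' = E \<union> ({s} \<times> C);
         w' = (\<lambda>e. if e \<in> ({s} \<times> C) - E then dH e
                   else if e \<in> E - ({s} \<times> C) then 2 * ereal (real (wG e))
                   else min (dH e) (2 * ereal (real (wG e))))
     in hdist h V E' w' s v = dist V E' w' s v)"
proof
  fix v assume vV: "v \<in> V"
  define wr where "wr = (\<lambda>e. real (wG e))"
  define wg where "wg = (\<lambda>e. ereal (real (wG e)))"
  define wH where "wH = (\<lambda>(a, b). dt a b)"
  define dH where "dH = (\<lambda>(x, y). dist C (C \<times> C) wH x y)"
  define E' where "E' = E \<union> ({s} \<times> C)"
  define w' where "w' = (\<lambda>e. if e \<in> ({s} \<times> C) - E then dH e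
                   else if e \<in> E - ({s} \<times> C) then 2 * ereal (real (wG e))
                   else min (dH e) (2 * ereal (real (wG e))))"
  define k where "k = nat \<lceil>real h / 2\<rceil>"
  have k: "k = (h + 1) div 2" unfolding k_def by linarith
  have k1: "1 \<le> k" "k \<le> h" "2 \<le> h \<Longrightarrow> k + 1 \<le> h" "h = 1 \<Longrightarrow> k = 1"
    using h1 unfolding k by auto
  have wg_pw: "\<And>P. pw wg P = ereal (pwr wr P)" unfolding wg_def wr_def by (rule pw_ereal)
  have wr_nn: "\<forall>e. 0 \<le> wr e" unfolding wr_def by simp
  have wg_nn: "\<forall>e\<in>E. 0 \<le> wg e" unfolding wg_def by simp
  have hit': "\<And>u x p. is_shortest_path V E wg p u x \<Longrightarrow> length p = k \<Longrightarrow>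
      \<exists>q. is_shortest_path V E wg q u x \<and> length q = k \<and> set q \<inter> C \<noteq> {}"
    using hit unfolding wg_def k_def by blast
  have dt': "\<And>x y. x \<in> C \<Longrightarrow> y \<in> V \<Longrightarrow> dist V E wg x y \<le> dt x y \<and> dt x y \<le> 2 * hdist h V E wg x y"
    using dt unfolding wg_def by blast
  have dt_nn: "\<And>x y. x \<in> C \<Longrightarrow> y \<in> V \<Longrightarrow> 0 \<le> dt x y"
    using dt' dist_nonneg[OF wg_nn] order_trans by metis
  have finC: "finite C" using finV CV finite_subset by blast
  have wH_nn: "\<forall>e\<in>C \<times> C. 0 \<le> wH e" unfolding wH_def using dt_nn CV by auto
  have dH_nn: "\<And>e. 0 \<le> dH e" unfolding dH_def using dist_nonneg[OF wH_nn] by auto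
  have dH_dt: "\<And>x y. x \<in> C \<Longrightarrow> y \<in> C \<Longrightarrow> dH (x, y) \<le> dt x y"
  proof -
    fix x y assume xy: "x \<in> C" "y \<in> C"
    show "dH (x, y) \<le> dt x y"
    proof (cases "x = y")
      case True
      have "dH (x, y) \<le> pw wH [x]" unfolding dH_def using xy True dist_le[of C "C \<times> C" "[x]" x x wH]
        by (auto simp: is_path_iff)
      moreover have "0 \<le> dt x y" using dt_nn xy CV by auto
      ultimately show ?thesis by simp
    next
      case False
      have "dH (x, y) \<le> pw wH [x, y]" unfolding dH_def using xy False dist_le[of C "C \<times> C" "[x, y]" x y wH]
        by (auto simp: is_path_iff)
      then show ?thesis unfolding wH_def by simp
    qed
  qed
  have dH_tri: "\<And>x y z. y \<in> C \<Longrightarrow> z \<in> C \<Longrightarrow> dH (x, z) \<le> dH (x, y) + dt y z"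
    unfolding dH_def using dist_triangle[OF finC wH_nn] unfolding wH_def by auto
  have dt_walk: "\<And>x P. x \<in> C \<Longrightarrow> walk E P \<Longrightarrow> P \<noteq> [] \<Longrightarrow> hd P = x \<Longrightarrow> set P \<subseteq> V \<Longrightarrow>
      length P \<le> Suc h \<Longrightarrow> dt x (last P) \<le> ereal (2 * pwr wr P)"
  proof -
    fix x P assume a: "x \<in> C" "walk E P" "P \<noteq> []" "hd P = x" "set P \<subseteq> V" "length P \<le> Suc h"
    obtain q where q: "is_path V E q x (last P)" "pw wg q \<le> pw wg P" "length q \<le> length P"
      using shortcut[OF wg_nn a(2,3,5)] a(4) by blast
    have "hdist h V E wg x (last P) \<le> pw wg P" using hdist_le[OF q(1), of h wg] q a(6) by (meson le_trans order_trans)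
    then have hh: "2 * hdist h V E wg x (last P) \<le> 2 * pw wg P" by (simp add: ereal_mult_left_mono)
    have "last P \<in> V" using a by auto
    then have "dt x (last P) \<le> 2 * hdist h V E wg x (last P)" using dt' a(1) by blast
    also note hh
    also have "2 * pw wg P = ereal (2 * pwr wr P)" by (simp add: wg_pw)
    finally show "dt x (last P) \<le> ereal (2 * pwr wr P)" .
  qed
  have w'_nn: "\<And>e. 0 \<le> w' e" unfolding w'_def using dH_nn by auto
  have w'_le: "\<And>e. e \<in> E \<Longrightarrow> w' e \<le> ereal (2 * wr e)" unfolding w'_def wr_def by auto
  have w'_eq: "\<And>e. e \<in> E \<Longrightarrow> fst e \<noteq> s \<Longrightarrow> w' e = ereal (2 * wr e)" unfolding w'_def wr_def by auto
  have w'_sc: "\<And>c. c \<in> C \<Longrightarrow> w' (s, c) \<le> dH (s, c)" unfolding w'_def by auto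
  have w'_first: "\<And>y. (s, y) \<in> E' \<Longrightarrow> (y \<in> C \<and> w' (s, y) = dH (s, y)) \<or> ((s, y) \<in> E \<and> w' (s, y) = ereal (2 * wr (s, y)))"
    unfolding w'_def E'_def wr_def by (auto simp: min_def)
  have pw'_le: "\<And>P. walk E P \<Longrightarrow> pw w' P \<le> ereal (2 * pwr wr P)"
  proof -
    fix P show "walk E P \<Longrightarrow> pw w' P \<le> ereal (2 * pwr wr P)"
    proof (induction P rule: induct_list012)
      case (3 x y zs)
      then have "w' (x, y) \<le> ereal (2 * wr (x, y))" "pw w' (y # zs) \<le> ereal (2 * pwr wr (y # zs))"
        using w'_le by auto
      then have "w' (x, y) + pw w' (y # zs) \<le> ereal (2 * wr (x, y)) + ereal (2 * pwr wr (y # zs))"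
        by (rule add_mono)
      then show ?case by (simp add: distrib_left)
    qed auto
  qed
  have pw'_eq: "\<And>P. walk E P \<Longrightarrow> s \<notin> set P \<Longrightarrow> pw w' P = ereal (2 * pwr wr P)"
  proof -
    fix P show "walk E P \<Longrightarrow> s \<notin> set P \<Longrightarrow> pw w' P = ereal (2 * pwr wr P)"
    proof (induction P rule: induct_list012)
      case (3 x y zs)
      then have "w' (x, y) = ereal (2 * wr (x, y))" using w'_eq by auto
      then show ?case using 3 by (simp add: distrib_left)
    qed auto
  qed
  have walkE: "\<And>P. walk E' P \<Longrightarrow> s \<notin> set P \<Longrightarrow> walk E P"
  proof -
    fix P show "walk E' P \<Longrightarrow> s \<notin> set P \<Longrightarrow> walk E P"
      by (induction P rule: induct_list012) (auto simp: E'_def)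
  qed
  have EE': "\<And>P. walk E P \<Longrightarrow> walk E' P"
  proof -
    fix P show "walk E P \<Longrightarrow> walk E' P"
      by (induction P rule: induct_list012) (auto simp: E'_def)
  qed
  have w'_nnE: "\<forall>e\<in>E'. 0 \<le> w' e" using w'_nn by auto
  have EV': "E' \<subseteq> V \<times> V" unfolding E'_def using EV CV sV by auto
  have main: "hdist h V E' w' s v = dist V E' w' s v"
  proof (rule antisym[OF _ dist_le_hdist])
    show "hdist h V E' w' s v \<le> dist V E' w' s v"
    proof (cases "dist V E' w' s v = \<infinity>")
      case True then show ?thesis by simp
    next
      case Dfin: False
      define D where "D = dist V E' w' s v"
      have "\<exists>p. is_path V E' p s v"
      proof (rule ccontr)
        assume "\<not> ?thesis" then have "dist V E' w' s v = \<infinity>" unfolding dist_def by (simp add: top_ereal_def)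
        with Dfin show False by simp
      qed
      then obtain p0 where p0: "is_path V E' p0 s v \<and> pw w' p0 = D"
        using dist_attained[OF finV] D_def by metis
      obtain p where p: "is_path V E' p s v \<and> pw w' p = D"
         and pmin: "\<forall>q. is_path V E' q s v \<and> pw w' q = D \<longrightarrow> length p \<le> length q"
        using ex_has_least_nat[of "\<lambda>q. is_path V E' q s v \<and> pw w' q = D" p0 length] p0 by blast
      have "length p \<le> Suc h"
      proof (rule ccontr)
        assume long: "\<not> length p \<le> Suc h"
        have pP: "p \<noteq> []" "hd p = s" "last p = v" "set p \<subseteq> V" "distinct p" "walk E' p"
          using p by (auto simp: is_path_iff)
        obtain x t where pt: "p = x # t" using pP(1) by (cases p) auto
        obtain y1 rest where tr: "t = y1 # rest" using long pt by (cases t) auto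
        have pe: "p = s # y1 # rest" using pt tr pP(2) by simp
        have lr: "k \<le> length rest" using long k1 pe by auto
        define seg where "seg = take k rest"
        define b where "b = drop k rest"
        have rest: "rest = seg @ b" unfolding seg_def b_def by simp
        have segne: "seg \<noteq> []" and lseg: "length seg = k" using lr k1 unfolding seg_def by auto
        define z where "z = last seg"
        have sn: "s \<notin> set (y1 # rest)" using pP(5) pe by auto
        have dr: "distinct (y1 # seg @ b)" using pP(5) pe rest by simp
        have setV: "set (y1 # seg @ b) \<subseteq> V" using pP(4) pe rest by simp
        have wk0: "walk E' ((y1 # seg) @ b)" "(s, y1) \<in> E'" using pP(6) unfolding pe rest by auto
        have wk: "walk E' (y1 # seg)" "walk E' (z # b)"
          using wk0(1) walk_app[of "y1 # seg" E' b] segne unfolding z_def by auto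
        have zin: "z \<in> set seg" unfolding z_def using segne by simp
        have "s \<notin> set (y1 # seg)" "s \<notin> set (z # b)" using sn rest zin by auto
        then have wkE: "walk E (y1 # seg)" "walk E (z # b)"
          using walkE wk by auto
        have Dsplit: "D = w' (s, y1) + pw w' (y1 # seg) + pw w' (z # b)"
          using p pe rest pw_app[of "y1 # seg" w' b] segne unfolding z_def by (simp add: add.assoc)
        have Pseg: "pw w' (y1 # seg) = ereal (2 * (wr (y1, hd seg) + pwr wr seg))"
          using pw'_eq[OF wkE(1)] sn rest segne pwr_Cons[OF segne] by simp
        have y1seg: "(y1, hd seg) \<in> E" "walk E seg" using wkE(1) walk_Cons[OF segne] by auto
        have A0nn: "0 \<le> w' (s, y1)" using w'_nn by simp
        have Btnn: "0 \<le> pw w' (z # b)" using pw_nonneg[OF w'_nnE] wk(2) by simp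
        have "w' (s, y1) \<noteq> \<infinity>" "pw w' (z # b) \<noteq> \<infinity>"
          using Dfin Dsplit A0nn Btnn unfolding D_def by auto
        then obtain a0 b0 where a0: "w' (s, y1) = ereal a0" and b0: "pw w' (z # b) = ereal b0"
          using A0nn Btnn by (cases "w' (s, y1)"; cases "pw w' (z # b)") auto
        have Dval: "D = ereal (a0 + 2 * (wr (y1, hd seg) + pwr wr seg) + b0)"
          using Dsplit a0 b0 Pseg by simp
        have segP: "is_path V E seg (hd seg) z"
          using segne dr setV y1seg(2) unfolding is_path_iff z_def by auto
        have segS: "pw wg seg = dist V E wg (hd seg) z"
        proof (rule antisym)
          show "dist V E wg (hd seg) z \<le> pw wg seg" by (rule dist_le[OF segP])
          show "pw wg seg \<le> dist V E wg (hd seg) z"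
          proof (rule ccontr)
            assume "\<not> pw wg seg \<le> dist V E wg (hd seg) z"
            then have "dist V E wg (hd seg) z < pw wg seg" by simp
            then obtain r where r: "is_path V E r (hd seg) z" "pw wg r < pw wg seg"
              unfolding dist_def path_weight_pw Inf_less_iff by auto
            have rP: "r \<noteq> []" "hd r = hd seg" "last r = z" "set r \<subseteq> V" "walk E r"
              using r(1) by (auto simp: is_path_iff)
            have rlt: "pwr wr r < pwr wr seg" using r(2) wg_pw by simp
            define W2 where "W2 = s # (y1 # r) @ b"
            have wy1r: "walk E (y1 # r)" using walk_Cons[OF rP(1)] rP y1seg by simp
            have "walk E' ((y1 # r) @ b)" using walk_app[of "y1 # r" E' b] EE'[OF wy1r] wk(2) rP(1,3) by simp
            then have wW2: "walk E' W2" unfolding W2_def using wk0(2) by simp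
            have W2P: "W2 \<noteq> []" "hd W2 = s" "last W2 = v" "set W2 \<subseteq> V"
              using pP(3) pe rest rP setV sV segne unfolding W2_def z_def by (auto simp: last_append)
            have "pw w' W2 = w' (s, y1) + pw w' (y1 # r) + pw w' (z # b)"
              unfolding W2_def using pw_app[of "y1 # r" w' b] rP(1,3) by (simp add: add.assoc)
            also have "\<dots> \<le> ereal a0 + ereal (2 * pwr wr (y1 # r)) + ereal b0"
              unfolding a0 b0 by (intro add_mono order_refl pw'_le[OF wy1r])
            also have "\<dots> = ereal (a0 + 2 * (wr (y1, hd seg) + pwr wr r) + b0)"
              using pwr_Cons[OF rP(1)] rP(2) by simp
            also have "\<dots> < D" unfolding Dval using rlt by simp
            finally have "pw w' W2 < D" .
            moreover have "dist V E' w' (hd W2) (last W2) \<le> pw w' W2"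
              using dist_walk[OF w'_nnE wW2 W2P(1,4)] .
            ultimately show False using W2P D_def by simp
          qed
        qed
        have "is_shortest_path V E wg seg (hd seg) z" using segP segS unfolding is_shortest_path_def path_weight_pw by simp
        then obtain q where q: "is_shortest_path V E wg q (hd seg) z" "length q = k" "set q \<inter> C \<noteq> {}"
          using hit' lseg by blast
        then obtain c where cq: "c \<in> set q" "c \<in> C" by blast
        then obtain q1 q2 where qs: "q = q1 @ c # q2" by (meson split_list)
        have qP: "q \<noteq> []" "hd q = hd seg" "last q = z" "set q \<subseteq> V" "walk E q"
          using q(1) by (auto simp: is_path_iff is_shortest_path_def)
        have "pw wg q = pw wg seg" using q(1) segS unfolding is_shortest_path_def path_weight_pw by simp
        then have pqs: "pwr wr q = pwr wr seg" using wg_pw by simp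
        have qsplit: "pwr wr q = pwr wr (q1 @ [c]) + pwr wr (c # q2)"
          using pwr_app[of "q1 @ [c]" wr q2] qs by simp
        have wq: "walk E (q1 @ [c])" "walk E (c # q2)"
          using qP(5) walk_app[of "q1 @ [c]" E q2] qs by auto
        have lastc: "last (c # q2) = z" using qP(3) qs by simp
        have hdq1: "hd (q1 @ [c]) = hd seg" using qP(2) qs by (cases q1) auto
        define P1 where "P1 = y1 # q1 @ [c]"
        have P1w: "walk E P1" unfolding P1_def using walk_Cons[of "q1 @ [c]" E y1] hdq1 wq y1seg by simp
        have P1r: "pwr wr P1 = wr (y1, hd seg) + pwr wr (q1 @ [c])"
          unfolding P1_def using pwr_Cons[of "q1 @ [c]" wr y1] hdq1 by simp
        have P1l: "length P1 \<le> Suc k" unfolding P1_def using q(2) qs by simp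
        have P1V: "set P1 \<subseteq> V" unfolding P1_def using qP(4) qs setV by auto
        have P1hd: "hd P1 = y1" "last P1 = c" "P1 \<noteq> []" unfolding P1_def by auto
        have claim: "w' (s, c) \<le> ereal a0 + ereal (2 * pwr wr P1)"
        proof -
          have wsc: "w' (s, c) \<le> dH (s, c)" using w'_sc cq(2) .
          have hP1: "\<And>x. x = y1 \<Longrightarrow> x \<in> C \<Longrightarrow> dt x c \<le> ereal (2 * pwr wr P1)"
            using dt_walk[OF _ P1w P1hd(3) _ P1V] P1hd P1l k1 by fastforce
          from w'_first[OF wk0(2)] show ?thesis
          proof
            assume a: "y1 \<in> C \<and> w' (s, y1) = dH (s, y1)"
            have "dH (s, c) \<le> dH (s, y1) + dt y1 c" using dH_tri a cq(2) by blast
            also have "\<dots> \<le> ereal a0 + ereal (2 * pwr wr P1)"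
              using a a0 hP1 by (intro add_mono) auto
            finally show ?thesis using wsc by simp
          next
            assume a: "(s, y1) \<in> E \<and> w' (s, y1) = ereal (2 * wr (s, y1))"
            then have a0e: "a0 = 2 * wr (s, y1)" using a0 by simp
            show ?thesis
            proof (cases "2 \<le> h")
              case True
              have P0w: "walk E (s # P1)" using walk_Cons[OF P1hd(3)] P1hd a P1w by simp
              have "dt s (last (s # P1)) \<le> ereal (2 * pwr wr (s # P1))"
                using dt_walk[OF sC P0w] P1V sV P1l k1(3)[OF True] by simp
              then have "dt s c \<le> ereal (2 * (wr (s, y1) + pwr wr P1))"
                using pwr_Cons[OF P1hd(3)] P1hd by simp
              moreover have "dH (s, c) \<le> dt s c" using dH_dt sC cq(2) by blast
              ultimately show ?thesis using wsc a0e by (simp add: distrib_left)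
            next
              case False
              then have h1': "h = 1" using h1 by simp
              then have kk: "k = 1" using k1 by simp
              have y1V: "y1 \<in> V" using setV by simp
              have "dist V E wg y1 y1 \<le> pw wg [y1]" by (rule dist_le) (simp add: is_path_iff y1V)
              moreover have "0 \<le> dist V E wg y1 y1" by (rule dist_nonneg[OF wg_nn])
              ultimately have "is_shortest_path V E wg [y1] y1 y1"
                unfolding is_shortest_path_def path_weight_pw by (simp add: is_path_iff y1V)
              then obtain q' where q': "is_shortest_path V E wg q' y1 y1" "length q' = 1" "set q' \<inter> C \<noteq> {}"
                using hit' kk by fastforce
              then obtain u where "q' = [u]" by (cases q') auto
              then have y1C: "y1 \<in> C" using q' by (auto simp: is_shortest_path_def is_path_iff)
              have "dH (s, c) \<le> dH (s, y1) + dt y1 c" using dH_tri y1C cq(2) by blast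
              also have "dH (s, y1) \<le> dt s y1" using dH_dt sC y1C by blast
              also have "dt s y1 \<le> ereal (2 * wr (s, y1))"
                using dt_walk[OF sC, of "[s, y1]"] a sV y1V h1 by simp
              also have "dt y1 c \<le> ereal (2 * pwr wr P1)" using hP1 y1C by blast
              finally show ?thesis using wsc a0e by (simp add: add_mono)
            qed
          qed
        qed
        define W where "W = s # (c # q2) @ b"
        have "walk E' ((c # q2) @ b)" using walk_app[of "c # q2" E' b] EE'[OF wq(2)] wk(2) lastc by simp
        then have wW: "walk E' W" unfolding W_def using cq(2) walk_Cons[of "(c # q2) @ b" E' s] by (simp add: E'_def)
        have WP: "W \<noteq> []" "hd W = s" "last W = v" "set W \<subseteq> V"
          using pP(3) pe rest qP(4) qs setV sV segne lastc unfolding W_def z_def by (auto simp: last_append)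
        have Wl: "length W < length p" unfolding W_def pe rest using lseg q(2) qs by simp
        have "pw w' W = w' (s, c) + pw w' (c # q2) + pw w' (z # b)"
          unfolding W_def using pw_app[of "c # q2" w' b] lastc by (simp add: add.assoc)
        also have "\<dots> \<le> (ereal a0 + ereal (2 * pwr wr P1)) + ereal (2 * pwr wr (c # q2)) + ereal b0"
          unfolding b0 by (intro add_mono order_refl pw'_le[OF wq(2)] claim)
        also have "\<dots> = D" unfolding Dval using P1r qsplit pqs by (simp add: algebra_simps)
        finally have Wle: "pw w' W \<le> D" .
        obtain q' where q': "is_path V E' q' s v" "pw w' q' \<le> pw w' W" "length q' \<le> length W"
          using shortcut[OF w'_nnE wW WP(1,4)] WP(2,3) by metis
        have "D \<le> pw w' q'" unfolding D_def by (rule dist_le[OF q'(1)])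
        then have "pw w' q' = D" using q'(2) Wle by simp
        then have "length p \<le> length q'" using pmin q'(1) by blast
        then show False using q'(3) Wl by simp
      qed
      then show ?thesis using hdist_le p D_def by metis
    qed
  qed
  then show "(let dH = (\<lambda>(x, y). dist C (C \<times> C) (\<lambda>(a, b). dt a b) x y);
         E' = E \<union> ({s} \<times> C);
         w' = (\<lambda>e. if e \<in> ({s} \<times> C) - E then dH e
                   else if e \<in> E - ({s} \<times> C) then 2 * ereal (real (wG e))
                   else min (dH e) (2 * ereal (real (wG e))))
     in hdist h V E' w' s v = dist V E' w' s v)"
    unfolding Let_def E'_def w'_def dH_def wH_def .
qed

end
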